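(* Let $A\subset\mathbb{R}^d$ have positive reach $\tau_A$, let $\bar\tau\in(0,\tau_A]$, and let $\mathbb{X}\subset A$ be a finite point sample that is $\delta$-dense in $A$ with $\delta<\bar\tau/4$. Let $x\in\mathbb{X}$, $\epsilon\in(0,\tau_A)$, $q\in A$, and $p\in B_\epsilon(x)\cap\mathrm{UP}(A,q)$. If $q\notin B_\epsilon(x)$, then the sphere $\partial B_\epsilon(x)$ meets the line segment $\overline{qp}$ in a unique point $y$, and $\|y-q\|\le\epsilon^2/\tau_A$.
   Context: For closed $A\subset\mathbb{R}^d$: $\mathrm{UP}(A)$ is the set of points with a unique nearest point in $A$, $\xi_A$ maps each such point to it, $\mathrm{UP}(A,q)=\{z\in\mathrm{UP}(A):\xi_A(z)=q\}$, $\mathrm{Med}(A)=\mathbb{R}^d\setminus\mathrm{UP}(A)$, reach $\tau_A=\inf_{a\in A}d(a,\mathrm{Med}(A))$. $\mathbb{X}$ is $\delta$-dense in $A$ if every point of $A$ is at distance $<\delta$ from a point of $\mathbb{X}$. $B_\epsilon(x)$ is the open Euclidean ball and $\partial B_\epsilon(x)$ its boundary sphere. *)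

theory Defs
  imports "HOL-Analysis.Analysis"
begin

definition UP :: "'a::euclidean_space set \<Rightarrow> 'a set" where
  "UP A = {z. \<exists>!a. a \<in> A \<and> dist z a = infdist z A}"

definition xi :: "'a::euclidean_space set \<Rightarrow> 'a \<Rightarrow> 'a" where
  "xi A z = (THE a. a \<in> A \<and> dist z a = infdist z A)"

definition UP_at :: "'a::euclidean_space set \<Rightarrow> 'a \<Rightarrow> 'a set" where
  "UP_at A q = {z \<in> UP A. xi A z = q}"

definition Med :: "'a::euclidean_space set \<Rightarrow> 'a set" where
  "Med A = UNIV - UP A"

definition reach :: "'a::euclidean_space set \<Rightarrow> ereal" where
  "reach A = (INF a\<in>A. (if Med A = {} then \<infinity> else ereal (infdist a (Med A))))"

end

theory Submission imports Defs begin

lemma infdist_geI: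
  assumes "A \<noteq> {}" "\<And>a. a \<in> A \<Longrightarrow> c \<le> dist x a"
  shows "c \<le> infdist x A"
  using assms by (simp add: infdist_notempty cINF_greatest)

lemma up_xi:
  assumes "z \<in> UP A"
  shows "xi A z \<in> A" "dist z (xi A z) = infdist z A"
    "\<And>a. a \<in> A \<Longrightarrow> dist z a = infdist z A \<Longrightarrow> a = xi A z"
proof -
  have ex: "\<exists>!a. a \<in> A \<and> dist z a = infdist z A" using assms by (simp add: UP_def)
  have th: "xi A z \<in> A \<and> dist z (xi A z) = infdist z A"
    unfolding xi_def by (rule theI'[OF ex])
  show "xi A z \<in> A" "dist z (xi A z) = infdist z A" using th by auto
  show "\<And>a. a \<in> A \<Longrightarrow> dist z a = infdist z A \<Longrightarrow> a = xi A z"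
    using ex th by blast
qed

lemma near_UP:
  assumes "closed A" "A \<noteq> {}" "ereal (infdist z A) < reach A"
  shows "z \<in> UP A"
proof (rule ccontr)
  assume "z \<notin> UP A"
  hence zM: "z \<in> Med A" by (simp add: Med_def)
  obtain a where a: "a \<in> A" "infdist z A = dist z a"
    using infdist_attains_inf[OF assms(1,2)] by blast
  have "reach A \<le> (if Med A = {} then \<infinity> else ereal (infdist a (Med A)))"
    unfolding reach_def using a(1) by (rule INF_lower)
  also have "\<dots> = ereal (infdist a (Med A))" using zM by auto
  also have "\<dots> \<le> ereal (dist a z)" using infdist_le[OF zM] by simp
  finally show False using assms(3) a(2) by (simp add: dist_commute)
qed

lemma xi_cont:
  assumes "closed A" "S \<subseteq> UP A"
  shows "continuous_on S (xi A)"
proof -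
  have "continuous (at z within S) (xi A)" if zS: "z \<in> S" for z
  proof (rule continuous_within_eps_delta[THEN iffD2], intro allI impI)
    fix e :: real assume e: "0 < e"
    have zU: "z \<in> UP A" using zS assms by auto
    note X = up_xi[OF zU]
    define K where "K = (A \<inter> cball z (infdist z A + 1)) - ball (xi A z) e"
    have Kc: "compact K" unfolding K_def
      by (intro compact_diff closed_Int_compact) (auto intro: assms)
    have "\<exists>g>0. \<forall>a\<in>K. infdist z A + g \<le> dist z a"
    proof (cases "K = {}")
      case True thus ?thesis by (intro exI[of _ 1]) auto
    next
      case False
      obtain a0 where a0: "a0 \<in> K" "\<forall>a\<in>K. dist z a0 \<le> dist z a"
        using continuous_attains_inf[OF Kc False, of "\<lambda>a. dist z a"]
          continuous_on_dist[OF continuous_on_const continuous_on_id, of K z]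
        by auto
      have "a0 \<in> A" "a0 \<noteq> xi A z" using a0(1) e unfolding K_def by auto
      hence "dist z a0 \<noteq> infdist z A" using X(3) by metis
      moreover have "infdist z A \<le> dist z a0" using \<open>a0 \<in> A\<close> by (rule infdist_le)
      ultimately have "infdist z A < dist z a0" by simp
      thus ?thesis using a0(2)
        by (intro exI[of _ "dist z a0 - infdist z A"]) auto
    qed
    then obtain g where g: "g > 0" "\<forall>a\<in>K. infdist z A + g \<le> dist z a" by blast
    show "\<exists>d>0. \<forall>y\<in>S. dist y z < d \<longrightarrow> dist (xi A y) (xi A z) < e"
    proof (intro exI[of _ "min (g/2) (1/2)"] conjI ballI impI)
      fix y assume yS: "y \<in> S" and dy: "dist y z < min (g/2) (1/2)"
      have yU: "y \<in> UP A" using yS assms by auto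
      note Y = up_xi[OF yU]
      have "infdist y A \<le> infdist z A + dist y z" by (rule infdist_triangle)
      hence h: "dist z (xi A y) \<le> infdist z A + 2 * dist y z"
        using Y(2) dist_triangle[of z "xi A y" y] by (simp add: dist_commute)
      show "dist (xi A y) (xi A z) < e"
      proof (rule ccontr)
        assume "\<not> ?thesis"
        hence "xi A y \<in> K" unfolding K_def using Y(1) h dy
          by (auto simp: dist_commute)
        hence "infdist z A + g \<le> dist z (xi A y)" using g by auto
        thus False using h dy by auto
      qed
    qed (auto simp: g)
  qed
  thus ?thesis by (simp add: continuous_on_eq_continuous_within)
qed

lemma ray_mono:
  assumes "q \<in> A" "norm u = 1" "infdist (q + s *\<^sub>R u) A = s" "0 \<le> s'" "s' \<le> s"
  shows "infdist (q + s' *\<^sub>R u) A = s'"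
proof (rule antisym)
  show "infdist (q + s' *\<^sub>R u) A \<le> s'"
    using infdist_le[OF assms(1), of "q + s' *\<^sub>R u"] assms by (simp add: dist_norm)
  have "s' \<le> dist (q + s' *\<^sub>R u) a" if "a \<in> A" for a
  proof -
    have "s \<le> dist (q + s *\<^sub>R u) a" using infdist_le[OF that, of "q + s *\<^sub>R u"] assms(3) by simp
    also have "\<dots> \<le> dist (q + s' *\<^sub>R u) a + dist (q + s *\<^sub>R u) (q + s' *\<^sub>R u)"
      by (metis dist_commute dist_triangle)
    also have "dist (q + s *\<^sub>R u) (q + s' *\<^sub>R u) = s - s'"
    proof -
      have "(q + s *\<^sub>R u) - (q + s' *\<^sub>R u) = (s - s') *\<^sub>R u" by (simp add: algebra_simps)
      thus ?thesis using assms by (simp add: dist_norm)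
    qed
    finally show ?thesis by simp
  qed
  thus "s' \<le> infdist (q + s' *\<^sub>R u) A"
    using assms(1) by (intro infdist_geI) auto
qed

lemma ray_step:
  assumes clA: "closed A" and qA: "q \<in> A" and u1: "norm u = 1" and T0: "T > 0"
    and bT: "infdist (q + T *\<^sub>R u) A = T" and e0: "0 < \<eta>" and eT: "\<eta> \<le> T/2"
    and rch: "ereal (T + \<eta>) < reach A"
  shows "infdist (q + (T + \<eta>) *\<^sub>R u) A = T + \<eta>"
proof -
  define b where "b = q + T *\<^sub>R u"
  have Ane: "A \<noteq> {}" using qA by auto
  have dD: "T - \<eta> \<le> infdist y A \<and> infdist y A \<le> T + \<eta>" if "y \<in> cball b \<eta>" for y
    using that infdist_triangle[of y A b] infdist_triangle[of b A y] bT
    by (auto simp: b_def dist_commute)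
  have DU: "cball b \<eta> \<subseteq> UP A"
  proof
    fix y assume y: "y \<in> cball b \<eta>"
    have "ereal (infdist y A) \<le> ereal (T + \<eta>)" using dD[OF y] by simp
    thus "y \<in> UP A" using near_UP[OF clA Ane] rch by (meson le_less_trans)
  qed
  have pos: "infdist y A > 0" if "y \<in> cball b \<eta>" for y using dD[OF that] eT e0 by auto
  define n where "n y = (1 / infdist y A) *\<^sub>R (y - xi A y)" for y
  define F where "F y = b + \<eta> *\<^sub>R n y" for y
  have nn: "norm (n y) = 1" if "y \<in> cball b \<eta>" for y
  proof -
    have "norm (y - xi A y) = infdist y A" using up_xi(2)[of y A] DU that by (auto simp: dist_norm)
    thus ?thesis using pos[OF that] by (simp add: n_def)
  qed
  have cF: "continuous_on (cball b \<eta>) F"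
    unfolding F_def n_def
    by (intro continuous_intros xi_cont[OF clA DU]) (use pos in force)
  have FD: "F \<in> cball b \<eta> \<rightarrow> cball b \<eta>"
    using nn e0 by (auto simp: F_def dist_norm)
  obtain y where yD: "y \<in> cball b \<eta>" and fy: "F y = y" using brouwer_ball[OF e0 cF FD] by blast
  define a where "a = xi A y"
  define r where "r = infdist y A"
  have yU: "y \<in> UP A" using DU yD by blast
  have aA: "a \<in> A" using up_xi(1)[OF yU] by (simp add: a_def)
  have ra: "dist y a = r" using up_xi(2)[OF yU] by (simp add: a_def r_def)
  have r0: "r > 0" using pos[OF yD] by (simp add: r_def)
  have rge: "r \<ge> T - \<eta>" using dD[OF yD] by (simp add: r_def)
  have ny: "n y = (1/r) *\<^sub>R (y - a)" by (simp add: n_def a_def r_def)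
  have beq: "b = a + ((r - \<eta>) / r) *\<^sub>R (y - a)"
  proof -
    have "b + \<eta> *\<^sub>R n y = y" using fy by (simp add: F_def)
    hence "b = y - \<eta> *\<^sub>R n y" by (simp add: eq_diff_eq)
    also have "\<dots> = a + (y - a) - (\<eta> / r) *\<^sub>R (y - a)" by (simp add: ny)
    also have "\<dots> = a + ((r - \<eta>) / r) *\<^sub>R (y - a)"
    proof -
      have "(r - \<eta>) / r = 1 - \<eta> / r" using r0 by (simp add: field_simps)
      thus ?thesis by (simp add: scaleR_diff_left)
    qed
    finally show ?thesis .
  qed
  have ya: "norm (y - a) = r" using ra by (simp add: dist_norm)
  have bF: "b + \<eta> *\<^sub>R n y = y" using fy by (simp add: F_def)
  have "dist b y = norm (\<eta> *\<^sub>R n y)" using bF by (metis dist_norm add_diff_cancel_left' dist_commute)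
  hence dby: "dist b y = \<eta>" using nn[OF yD] e0 by simp
  have dba: "dist b a = r - \<eta>"
  proof -
    have "b - a = ((r - \<eta>) / r) *\<^sub>R (y - a)" using beq by simp
    thus ?thesis using ya r0 rge eT e0 by (simp add: dist_norm)
  qed
  have inf_b: "infdist b A = r - \<eta>"
  proof (rule antisym)
    show "infdist b A \<le> r - \<eta>" using infdist_le[OF aA, of b] dba by simp
    have "r - \<eta> \<le> dist b a'" if "a' \<in> A" for a'
    proof -
      have "r \<le> dist y a'" using infdist_le[OF that, of y] by (simp add: r_def)
      also have "\<dots> \<le> dist y b + dist b a'" by (rule dist_triangle)
      finally show ?thesis using dby by (simp add: dist_commute)
    qed
    thus "r - \<eta> \<le> infdist b A" using Ane by (intro infdist_geI) auto
  qed
  have rT: "r = T + \<eta>" using inf_b bT by (simp add: b_def)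
  have bU: "b \<in> UP A"
    using DU e0 by auto
  have "a = q"
  proof -
    have "a = xi A b" using up_xi(3)[OF bU aA] dba inf_b by simp
    moreover have "q = xi A b" using up_xi(3)[OF bU qA] bT u1 T0 by (simp add: b_def dist_norm)
    ultimately show ?thesis by simp
  qed
  have "y = q + (T + \<eta>) *\<^sub>R u"
  proof -
    have "b - a = ((r - \<eta>) / r) *\<^sub>R (y - a)" using beq by simp
    hence "T *\<^sub>R u = (T / r) *\<^sub>R (y - q)" using \<open>a = q\<close> rT by (simp add: b_def)
    hence "y - q = (r / T) *\<^sub>R (T *\<^sub>R u)" using r0 T0 by simp
    also have "(r / T) *\<^sub>R (T *\<^sub>R u) = (T + \<eta>) *\<^sub>R u" using T0 rT by simp
    finally show ?thesis by (simp add: algebra_simps)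
  qed
  thus ?thesis using rT by (simp add: r_def)
qed


lemma ray_full:
  assumes clA: "closed A" and qA: "q \<in> A" and u1: "norm u = 1" and s00: "s0 > 0"
    and hs0: "infdist (q + s0 *\<^sub>R u) A = s0" and s0: "0 \<le> s" and rs: "ereal s < reach A"
  shows "infdist (q + s *\<^sub>R u) A = s"
proof (rule ccontr)
  assume ne: "infdist (q + s *\<^sub>R u) A \<noteq> s"
  define f where "f t = infdist (q + t *\<^sub>R u) A" for t
  have "\<not> s \<le> s0" using ray_mono[OF qA u1 hs0 s0] ne by auto
  hence ss0: "s0 < s" by simp
  define S where "S = {0..s} \<inter> {t. f t = t}"
  have cf: "continuous_on UNIV f" unfolding f_def by (intro continuous_intros)
  have clS: "closed S" unfolding S_def
    by (intro closed_Int closed_atLeastAtMost closed_Collect_eq cf continuous_on_id)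
  have s0S: "s0 \<in> S" using ss0 s00 hs0 by (simp add: S_def f_def)
  have bS: "bdd_above S" unfolding S_def by (rule bdd_aboveI[of _ s]) auto
  define T where "T = Sup S"
  have TS: "T \<in> S" unfolding T_def using closed_contains_Sup[OF _ bS clS] s0S by auto
  have Ts0: "s0 \<le> T" unfolding T_def using cSup_upper[OF s0S bS] .
  have Ts: "T \<le> s" "f T = T" using TS by (auto simp: S_def)
  have "T \<noteq> s" using ne Ts by (auto simp: f_def)
  hence Tlt: "T < s" using Ts by simp
  define \<eta> where "\<eta> = min (T/2) (s - T)"
  have e0: "0 < \<eta>" using Tlt Ts0 s00 by (simp add: \<eta>_def)
  have eT: "\<eta> \<le> T/2" unfolding \<eta>_def by (rule min.cobounded1)
  have Tes: "T + \<eta> \<le> s" by (simp add: \<eta>_def)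
  have "ereal (T + \<eta>) < reach A" using Tes rs by (meson ereal_less_eq(3) le_less_trans)
  hence "infdist (q + (T + \<eta>) *\<^sub>R u) A = T + \<eta>"
    using ray_step[OF clA qA u1 _ _ e0 eT] Ts0 s00 Ts by (simp add: f_def)
  hence "T + \<eta> \<in> S" using Tes Ts0 s00 e0 by (simp add: S_def f_def)
  hence "T + \<eta> \<le> T" unfolding T_def using cSup_upper[OF _ bS] by blast
  thus False using e0 by simp
qed


lemma aux_lin:
  fixes z1 z2 z3 z4 :: real
  assumes "z1 = (z2 + z3 - z4) / 2"
  shows "z4 = z2 + z3 - 2 * z1"
  using assms by (simp add: field_simps)

lemma sq_expand:
  fixes q u x :: "'a::euclidean_space"
  assumes u1: "norm u = 1"
  shows "(norm (q + h *\<^sub>R u - x))^2 = h^2 - 2*h*(u \<bullet> (x - q)) + (norm (x - q))^2"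
proof -
  define w where "w = x - q"
  have e: "q + h *\<^sub>R u - x = h *\<^sub>R u - w" by (simp add: w_def)
  have d: "inner (h *\<^sub>R u) w = ((norm (h *\<^sub>R u))^2 + (norm w)^2 - (norm (h *\<^sub>R u - w))^2) / 2"
    by (rule dot_norm_neg)
  have n1: "(norm (h *\<^sub>R u))^2 = h^2" using u1 by (simp add: power_mult_distrib)
  have n2: "inner (h *\<^sub>R u) w = h * (u \<bullet> w)" by simp
  have "(norm (h *\<^sub>R u - w))^2 = h^2 - 2*(h*(u \<bullet> w)) + (norm w)^2"
  proof -
    show ?thesis using aux_lin[OF d] unfolding n1 n2 by simp
  qed
  moreover have "norm (q + h *\<^sub>R u - x) = norm (h *\<^sub>R u - w)" by (simp only: e)
  ultimately have "(norm (q + h *\<^sub>R u - x))^2 = h^2 - 2*(h*(u \<bullet> w)) + (norm w)^2" by simp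
  thus ?thesis by (simp add: w_def mult.assoc)
qed

lemma key_ineq:
  assumes clA: "closed A" and qA: "q \<in> A" and xA: "x \<in> A" and pU: "p \<in> UP A"
    and xq: "xi A p = q" and pq: "p \<noteq> q"
    and s0: "0 < s" and rs: "ereal s < reach A"
  shows "2 * s * ((1 / norm (p - q)) *\<^sub>R (p - q) \<bullet> (x - q)) \<le> (norm (x - q))^2"
proof -
  define L where "L = norm (p - q)"
  define u where "u = (1 / L) *\<^sub>R (p - q)"
  have L0: "L > 0" using pq by (simp add: L_def)
  have u1: "norm u = 1" using L0 by (simp add: u_def L_def)
  have pqu: "q + L *\<^sub>R u = p" using L0 by (simp add: u_def)
  have "infdist p A = L" using up_xi(2)[OF pU] xq by (simp add: L_def dist_norm)
  hence hL: "infdist (q + L *\<^sub>R u) A = L" using pqu by simp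
  have hs: "infdist (q + s *\<^sub>R u) A = s" using ray_full[OF clA qA u1 L0 hL] s0 rs by simp
  have "s \<le> dist (q + s *\<^sub>R u) x" using infdist_le[OF xA, of "q + s *\<^sub>R u"] hs by simp
  hence "s^2 \<le> (norm (q + s *\<^sub>R u - x))^2" using s0 by (simp add: dist_norm power_mono)
  hence "s^2 \<le> s^2 - 2 * s * (u \<bullet> (x - q)) + (norm (x - q))^2" using sq_expand[OF u1, of q s x] by simp
  thus ?thesis by (simp add: u_def L_def)
qed

lemma quad_unique:
  fixes h1 h2 c W E L :: real
  assumes "h1^2 - 2*h1*c + W = E" "h2^2 - 2*h2*c + W = E" "L^2 - 2*L*c + W < E"
    "0 \<le> h1" "h1 \<le> L" "0 \<le> h2" "h2 \<le> L"
  shows "h1 = h2"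
proof (rule ccontr)
  assume ne: "h1 \<noteq> h2"
  have "(h1 - h2) * (h1 + h2 - 2*c) = 0" using assms(1,2) by (simp add: power2_eq_square algebra_simps)
  hence c: "h1 + h2 = 2*c" using ne by simp
  have e1: "W - E = (2*c)*h1 - h1^2" using assms(1) by (simp add: algebra_simps)
  have "L^2 - 2*L*c + W - E = L^2 - L*(2*c) + (2*c)*h1 - h1^2" using e1 by (simp add: algebra_simps)
  also have "\<dots> = (L - h1) * (L - h2)" unfolding c[symmetric] by (simp add: power2_eq_square algebra_simps)
  finally have "L^2 - 2*L*c + W - E = (L - h1) * (L - h2)" .
  moreover have "(L - h1) * (L - h2) \<ge> 0" using assms by simp
  ultimately show False using assms(3) by simp
qed

lemma bound_real:
  fixes h c W E t :: real
  assumes Q: "h^2 - 2*h*c + W = E" and tc: "2*t*c \<le> W" and EW: "E \<le> W"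
    and h0: "0 \<le> h" and ht: "h \<le> t" and t0: "0 < t" and E0: "0 \<le> E"
  shows "h \<le> E / t"
proof -
  have a1: "h * (2*t*c) \<le> h * W" using tc h0 by (rule mult_left_mono)
  have a2: "(t - h) * E \<le> (t - h) * W" using EW ht by (intro mult_left_mono) auto
  have "t * E = t*h^2 - h*(2*t*c) + t * W" unfolding Q[symmetric] by (simp add: algebra_simps)
  hence "t * E \<ge> t*h^2 + (t - h) * E" using a1 a2 by (simp add: algebra_simps)
  hence "h * E \<ge> h * (t * h)" by (simp add: power2_eq_square algebra_simps)
  hence "E \<ge> t * h \<or> h = 0" using h0 by (cases "h = 0") (auto simp: mult_le_cancel_left)
  thus ?thesis using t0 h0 E0 by (auto simp: pos_le_divide_eq mult.commute)
qed

lemma inf_case: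
  fixes h c W E :: real
  assumes Q: "h^2 - 2*h*c + W = E" and c: "c \<le> 0" and EW: "E \<le> W" and h0: "0 \<le> h"
  shows "h = 0"
proof -
  have "h * c \<le> 0" using h0 c by (simp add: mult_nonneg_nonpos)
  hence "h^2 \<le> 0" using Q EW by linarith
  thus ?thesis by simp
qed

theorem mainTheorem15:
  fixes A X :: "'a::euclidean_space set"
    and x p q :: 'a and \<tau>bar \<delta> \<epsilon> :: real
  assumes "closed A"
    and "reach A > 0"
    and "0 < \<tau>bar" and "ereal \<tau>bar \<le> reach A"
    and "finite X" and "X \<subseteq> A"
    and "\<forall>a\<in>A. \<exists>x'\<in>X. dist a x' < \<delta>"
    and "\<delta> < \<tau>bar / 4"
    and "x \<in> X"
    and "0 < \<epsilon>" and "ereal \<epsilon> < reach A"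
    and "q \<in> A"
    and "p \<in> ball x \<epsilon> \<inter> UP_at A q"
    and "q \<notin> ball x \<epsilon>"
  shows "(\<exists>!y. y \<in> sphere x \<epsilon> \<inter> closed_segment q p)
       \<and> (\<forall>y \<in> sphere x \<epsilon> \<inter> closed_segment q p.
            ereal (norm (y - q)) \<le> ereal (\<epsilon>^2) / reach A)"
proof -
  note clA = assms(1) and qA = assms(12)
  have xA: "x \<in> A" using assms(6,9) by blast
  have pb: "dist x p < \<epsilon>" using assms(13) by simp
  have pU: "p \<in> UP A" and xq: "xi A p = q" using assms(13) by (auto simp: UP_at_def)
  have qx: "\<epsilon> \<le> dist x q" using assms(14) by simp
  have pq: "p \<noteq> q" using pb qx by auto
  define L where "L = norm (p - q)"
  define u where "u = (1 / L) *\<^sub>R (p - q)"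
  define w where "w = x - q"
  define c where "c = u \<bullet> w"
  have L0: "L > 0" using pq by (simp add: L_def)
  have u1: "norm u = 1" using L0 by (simp add: u_def L_def)
  have Lu: "L *\<^sub>R u = p - q" using L0 by (simp add: u_def)
  have "infdist p A = L" using up_xi(2)[OF pU] xq by (simp add: L_def dist_norm)
  moreover have "infdist p A \<le> dist p x" by (rule infdist_le[OF xA])
  ultimately have Le: "L < \<epsilon>" using pb by (simp add: dist_commute)
  have we: "\<epsilon> \<le> norm w" using qx by (simp add: w_def dist_norm)
  define g where "g h = norm (q + h *\<^sub>R u - x)" for h
  have gsq: "(g h)^2 = h^2 - 2*h*c + (norm w)^2" for h
    unfolding g_def c_def w_def by (rule sq_expand[OF u1])
  have g0: "g 0 = norm w" by (simp add: g_def w_def norm_minus_commute)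
  have gL: "g L = dist x p" using Lu by (simp add: g_def dist_norm norm_minus_commute)
  have segid: "(1 - t) *\<^sub>R q + t *\<^sub>R p = q + (t * L) *\<^sub>R u" for t
  proof -
    have "(t * L) *\<^sub>R u = t *\<^sub>R (p - q)" using Lu by (simp flip: scaleR_scaleR)
    thus ?thesis by (simp add: algebra_simps)
  qed
  have seg: "closed_segment q p = {q + h *\<^sub>R u | h. 0 \<le> h \<and> h \<le> L}"
  proof
    show "closed_segment q p \<subseteq> {q + h *\<^sub>R u | h. 0 \<le> h \<and> h \<le> L}"
    proof
      fix y assume "y \<in> closed_segment q p"
      then obtain t where t: "0 \<le> t" "t \<le> 1" "y = (1 - t) *\<^sub>R q + t *\<^sub>R p"
        by (auto simp: closed_segment_def)
      have "t * L \<le> L" using t L0 by (simp add: mult_le_cancel_right1)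
      thus "y \<in> {q + h *\<^sub>R u | h. 0 \<le> h \<and> h \<le> L}" using t L0 segid
        by (intro CollectI exI[of _ "t * L"]) auto
    qed
    show "{q + h *\<^sub>R u | h. 0 \<le> h \<and> h \<le> L} \<subseteq> closed_segment q p"
    proof
      fix y assume "y \<in> {q + h *\<^sub>R u | h. 0 \<le> h \<and> h \<le> L}"
      then obtain h where h: "0 \<le> h" "h \<le> L" "y = q + h *\<^sub>R u" by blast
      have "y = (1 - h / L) *\<^sub>R q + (h / L) *\<^sub>R p" using segid[of "h / L"] h L0 by simp
      moreover have "0 \<le> h / L" "h / L \<le> 1" using h L0 by auto
      ultimately show "y \<in> closed_segment q p" unfolding closed_segment_def by blast
    qed
  qed
  have onS: "y \<in> sphere x \<epsilon> \<inter> closed_segment q p \<longleftrightarrow>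
      (\<exists>h. 0 \<le> h \<and> h \<le> L \<and> y = q + h *\<^sub>R u \<and> g h = \<epsilon>)" for y
    by (auto simp: seg g_def dist_norm norm_minus_commute)
  have Qh: "h^2 - 2*h*c + (norm w)^2 = \<epsilon>^2" if "g h = \<epsilon>" for h
    using gsq[of h] that by simp
  have QL: "L^2 - 2*L*c + (norm w)^2 < \<epsilon>^2"
  proof -
    have "(g L)^2 < \<epsilon>^2" using gL pb by (simp add: power_strict_mono)
    thus ?thesis using gsq[of L] by simp
  qed
  have ex: "\<exists>y. y \<in> sphere x \<epsilon> \<inter> closed_segment q p"
  proof -
    have cg: "continuous_on {0..L} g" unfolding g_def by (intro continuous_intros)
    obtain h where h: "0 \<le> h" "h \<le> L" "g h = \<epsilon>"
      using IVT2'[of g L \<epsilon> 0, OF _ _ _ cg] gL g0 pb we L0 by auto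
    thus ?thesis using onS by blast
  qed
  have uniq: "y1 = y2" if Y1: "y1 \<in> sphere x \<epsilon> \<inter> closed_segment q p"
      and Y2: "y2 \<in> sphere x \<epsilon> \<inter> closed_segment q p" for y1 y2
  proof -
    obtain h1 where h1: "0 \<le> h1" "h1 \<le> L" "y1 = q + h1 *\<^sub>R u" "g h1 = \<epsilon>" using Y1 onS by blast
    obtain h2 where h2: "0 \<le> h2" "h2 \<le> L" "y2 = q + h2 *\<^sub>R u" "g h2 = \<epsilon>" using Y2 onS by blast
    have "h1 = h2" using quad_unique[OF Qh[OF h1(4)] Qh[OF h2(4)] QL] h1 h2 by simp
    thus ?thesis using h1 h2 by simp
  qed
  have K: "2 * s * c \<le> (norm w)^2" if "0 < s" "ereal s < reach A" for s
    using key_ineq[OF clA qA xA pU xq pq that] by (simp add: c_def u_def L_def w_def)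
  have bnd: "ereal (norm (y - q)) \<le> ereal (\<epsilon>^2) / reach A"
    if yS: "y \<in> sphere x \<epsilon> \<inter> closed_segment q p" for y
  proof -
    obtain h where h: "0 \<le> h" "h \<le> L" "y = q + h *\<^sub>R u" "g h = \<epsilon>" using yS onS by blast
    have ny: "norm (y - q) = h" using h u1 by simp
    have Q: "h^2 - 2*h*c + (norm w)^2 = \<epsilon>^2" by (rule Qh[OF h(4)])
    have EW: "\<epsilon>^2 \<le> (norm w)^2" using we assms(10) by (simp add: power_mono)
    show ?thesis
    proof (cases "reach A")
      case PInf
      have "c \<le> 0"
      proof (rule ccontr)
        assume "\<not> c \<le> 0"
        hence c0: "c > 0" by simp
        define s where "s = (norm w)^2 / c + 1"
        have "(norm w)^2 / c \<ge> 0" using c0 by simp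
        hence s0: "s > 0" by (simp add: s_def)
        have "2 * s * c \<le> (norm w)^2" using K[OF s0] PInf by simp
        moreover have "2 * s * c = 2 * (norm w)^2 + 2 * c" using c0 by (simp add: s_def algebra_simps)
        moreover have "(norm w)^2 \<ge> 0" by simp
        ultimately show False using c0 by linarith
      qed
      hence "h = 0" using inf_case[OF Q _ EW h(1)] by simp
      thus ?thesis using ny PInf by simp
    next
      case MInf thus ?thesis using assms(2) by simp
    next
      case (real t)
      have t0: "t > 0" using assms(2) real by simp
      have et: "\<epsilon> < t" using assms(11) real by simp
      have tc: "2 * t * c \<le> (norm w)^2"
      proof (cases "c \<le> 0")
        case True
        have "t * c \<le> 0" using True t0 by (simp add: mult_nonneg_nonpos)
        moreover have "(norm w)^2 \<ge> 0" by simp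
        ultimately show ?thesis by linarith
      next
        case False
        hence c0: "c > 0" by simp
        have "t \<le> (norm w)^2 / (2 * c)"
        proof (rule dense_le)
          fix s assume st: "s < t"
          show "s \<le> (norm w)^2 / (2 * c)"
          proof (cases "s \<le> 0")
            case True thus ?thesis using c0 by (meson order_trans divide_nonneg_pos zero_le_power2 zero_less_mult_iff zero_less_numeral)
          next
            case False
            hence "2 * s * c \<le> (norm w)^2" using K[of s] st real by simp
            thus ?thesis using c0 by (simp add: pos_le_divide_eq mult.commute mult.left_commute)
          qed
        qed
        thus ?thesis using c0 by (simp add: pos_le_divide_eq mult.commute mult.left_commute)
      qed
      have "h \<le> \<epsilon>^2 / t"
        by (rule bound_real[OF Q tc EW h(1) _ t0]) (use h(2) Le et in auto)
      thus ?thesis using ny real t0 by simp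
    qed
  qed
  show ?thesis using ex uniq bnd by blast
qed

end
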